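(* Let $f_1,\ldots,f_{i+1}\in R$, $I_i=\langle f_1,\ldots,f_i\rangle$, $I_{i+1}=\langle f_1,\ldots,f_{i+1}\rangle$ with $f_{i+1}\notin I_i$. Let $g_1,\ldots,g_M\in I_i$ be such that $\{g_1,\ldots,g_M\}$ is a Gröbner basis of $I_i$, let $p_1,\ldots,p_\ell\in I_{i+1}\setminus\{0\}$, $d_1,\ldots,d_\ell\in\mathbb{k}\setminus\{0\}$, $\tau_1,\ldots,\tau_\ell\in\mathbb{M}$, and let $$G=\{(\sigma_1\mathbf{e}_{j_1},g_1),\ldots,(\sigma_M\mathbf{e}_{j_M},g_M)\}\cup\{(\mathbf{e}_{i+1},f_{i+1}),(d_1\tau_1\mathbf{e}_{i+1},p_1),\ldots,(d_\ell\tau_\ell\mathbf{e}_{i+1},p_\ell)\}$$ with $j_1,\ldots,j_M\le i$. Assume that for every $(c\sigma\mathbf{e}_j,g)\in G$ one has $c\sigma\mathbf{e}_j\in\mathrm{sig}(g)$ and $\sigma\mathbf{e}_j=\mathrm{minsig}(g)$. Assume further that for every two elements $(c\sigma\mathbf{e}_{i+1},p),(d\tau\mathbf{e}_j,q)\in G$ with $p\ne q$, writing $u=t_{p,q}/t_p$ and $v=t_{p,q}/t_q$ and assuming $u\sigma\mathbf{e}_{i+1}\succeq v\tau\mathbf{e}_j$, one of the following holds: (i) $u\sigma\mathbf{e}_{i+1}=v\tau\mathbf{e}_j$ (as monic monomial signatures, i.e. $j=i+1$ and $u\sigma=v\tau$); or (ii) $u\sigma\mathbf{e}_{i+1}\succ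 v\tau\mathbf{e}_j$ and $(u\sigma\mathbf{e}_{i+1},\mathrm{S}(p,q))$ has a standard representation with respect to $G$. Then $\widehat G=\{g:(c\sigma\mathbf{e}_j,g)\in G\text{ for some } c\sigma\mathbf{e}_j\}$ is a Gröbner basis of $I_{i+1}$.
   Context: $R=\mathbb{k}[x_1,\ldots,x_n]$ over a field $\mathbb{k}$, $\mathbb{M}$ its monoid of monomials, $<$ a degree-compatible monomial ordering. For nonzero $p$: $t_p=\mathrm{lm}(p)$ (leading monomial), $c_p=\mathrm{lc}(p)$ (leading coefficient), $t_{p,q}=\mathrm{lcm}(t_p,t_q)$. The S-polynomial is $\mathrm{S}(p,q)=\frac{t_{p,q}}{t_p}p-\frac{c_p}{c_q}\frac{t_{p,q}}{t_q}q$. A standard representation of $s\in R$ with respect to a finite list $(g_1,\ldots,g_N)$ of polynomials is a tuple $(h_1,\ldots,h_N)$ in $R^N$ with $s=\sum h_kg_k$ and, for each $k$, $h_k=0$ or $\mathrm{lm}(h_k)\mathrm{lm}(g_k)\le\mathrm{lm}(s)$. Signatures: $\mathbf{e}_1,\ldots,\mathbf{e}_{i+1}$ are the canonical generators of $R^{i+1}$; a signature is a formal expression $c\tau\mathbf{e}_j$ ($c\in\mathbb{k}\setminus\{0\}$, $\tau\in\mathbb{M}$). For $p\in I_{i+1}$, if $p=h_1f_1+\cdots+h_jf_j$ with $j\le i+1$ and $h_j\ne0$, then $\mathrm{lc}(h_j)\mathrm{lm}(h_j)\mathbf{e}_j$ is a signature of $p$; $\mathrm{sig}(p)$ is the set of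 all of them. Order: $c\sigma\mathbf{e}_j\prec d\tau\mathbf{e}_k$ iff $j<k$, or $j=k$ and $\sigma<\tau$ (restricted to monic monomial signatures $\tau\mathbf{e}_j$ this is a well-ordering). $\mathrm{minsig}(p)$ is the unique $\prec$-minimal monic signature $\tau\mathbf{e}_j$ of $p$ (i.e. with $1\cdot\tau\mathbf{e}_j\in\mathrm{sig}(p)$). Signature standard representation: let $G=\{(c_k\mu_k\mathbf{e}_{j_k},g_k)\}_{k=1}^N$ be a finite set of pairs with $g_k\in I_{i+1}$ and $\mu_k\mathbf{e}_{j_k}=\mathrm{minsig}(g_k)$. A pair $(c\sigma\mathbf{e}_{i+1},s)$ with $s\in I_{i+1}$ has a standard representation with respect to $G$ if $c\sigma\mathbf{e}_{i+1}\in\mathrm{sig}(s)$ and there exist $h_1,\ldots,h_N\in R$ such that $(h_1,\ldots,h_N)$ is a standard representation of $s$ with respect to $(g_1,\ldots,g_N)$ and, for each $k$, $h_k=0$ or $\mathrm{lm}(h_k)\,\mathrm{minsig}(g_k)\preceq\sigma\mathbf{e}_{i+1}$ (where $t\cdot\mu\mathbf{e}_j=(t\mu)\mathbf{e}_j$). *)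

theory Defs
  imports "HOL-Library.Poly_Mapping"
begin

(* Monomials in the variables of the finite type 'v are exponent vectors 'v \<Rightarrow>\<^sub>0 nat
   (monomial multiplication = addition of exponent vectors, 1 = 0). *)
type_synonym 'v mon = "'v \<Rightarrow>\<^sub>0 nat"
type_synonym ('v, 'k) mpoly = "'v mon \<Rightarrow>\<^sub>0 'k"

definition mdeg :: "'v mon \<Rightarrow> nat" where
  "mdeg t = (\<Sum>x\<in>Poly_Mapping.keys t. Poly_Mapping.lookup t x)"

definition mdvd :: "'v mon \<Rightarrow> 'v mon \<Rightarrow> bool" where
  "mdvd s t \<longleftrightarrow> (\<exists>u. t = s + u)"

definition mlcm :: "'v mon \<Rightarrow> 'v mon \<Rightarrow> 'v mon" where
  "mlcm s t = Abs_poly_mapping (\<lambda>x. max (Poly_Mapping.lookup s x) (Poly_Mapping.lookup t x))"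

(* ord s t means s \<le> t; a degree-compatible monomial ordering *)
definition deg_mon_order :: "('v mon \<Rightarrow> 'v mon \<Rightarrow> bool) \<Rightarrow> bool" where
  "deg_mon_order ord \<longleftrightarrow>
     (\<forall>s. ord s s) \<and>
     (\<forall>s t. ord s t \<and> ord t s \<longrightarrow> s = t) \<and>
     (\<forall>s t u. ord s t \<and> ord t u \<longrightarrow> ord s u) \<and>
     (\<forall>s t. ord s t \<or> ord t s) \<and>
     (\<forall>t. ord 0 t) \<and>
     (\<forall>s t u. ord s t \<longrightarrow> ord (s + u) (t + u)) \<and>
     (\<forall>s t. mdeg s < mdeg t \<longrightarrow> ord s t \<and> s \<noteq> t)"

(* leading monomial (with the harmless convention lm 0 = 1) and leading coefficient *)
definition lm :: "('v mon \<Rightarrow> 'v mon \<Rightarrow> bool) \<Rightarrow> ('v, 'k::zero) mpoly \<Rightarrow> 'v mon" where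
  "lm ord p = (if p = 0 then 0 else (THE t. t \<in> Poly_Mapping.keys p \<and> (\<forall>s\<in>Poly_Mapping.keys p. ord s t)))"

definition lc :: "('v mon \<Rightarrow> 'v mon \<Rightarrow> bool) \<Rightarrow> ('v, 'k::zero) mpoly \<Rightarrow> 'k" where
  "lc ord p = Poly_Mapping.lookup p (lm ord p)"

definition tmul :: "'k::field \<Rightarrow> 'v mon \<Rightarrow> ('v, 'k) mpoly \<Rightarrow> ('v, 'k) mpoly" where
  "tmul c t p = Poly_Mapping.single t c * p"

definition spoly :: "('v mon \<Rightarrow> 'v mon \<Rightarrow> bool) \<Rightarrow> ('v, 'k::field) mpoly \<Rightarrow> ('v, 'k) mpoly \<Rightarrow> ('v, 'k) mpoly" where
  "spoly ord p q =
     (let t = mlcm (lm ord p) (lm ord q)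
      in tmul 1 (t - lm ord p) p - tmul (lc ord p / lc ord q) (t - lm ord q) q)"

definition gen_ideal :: "(nat \<Rightarrow> ('v, 'k::field) mpoly) \<Rightarrow> nat \<Rightarrow> ('v, 'k) mpoly set" where
  "gen_ideal f i = {q. \<exists>h. q = (\<Sum>k=1..i. h k * f k)}"

definition is_GB :: "('v mon \<Rightarrow> 'v mon \<Rightarrow> bool) \<Rightarrow> ('v, 'k::field) mpoly set \<Rightarrow> ('v, 'k) mpoly set \<Rightarrow> bool" where
  "is_GB ord G I \<longleftrightarrow> finite G \<and> G \<subseteq> I \<and>
     (\<forall>p\<in>I. p \<noteq> 0 \<longrightarrow> (\<exists>g\<in>G. g \<noteq> 0 \<and> mdvd (lm ord g) (lm ord p)))"

(* c * tau * e_j is a signature of p w.r.t. f_1,...,f_m  (here m = i+1) *)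
definition is_sig :: "('v mon \<Rightarrow> 'v mon \<Rightarrow> bool) \<Rightarrow> (nat \<Rightarrow> ('v, 'k::field) mpoly) \<Rightarrow> nat
     \<Rightarrow> 'k \<Rightarrow> 'v mon \<Rightarrow> nat \<Rightarrow> ('v, 'k) mpoly \<Rightarrow> bool" where
  "is_sig ord f m c tau j p \<longleftrightarrow> 1 \<le> j \<and> j \<le> m \<and>
     (\<exists>h. p = (\<Sum>k=1..j. h k * f k) \<and> h j \<noteq> 0 \<and> lc ord (h j) = c \<and> lm ord (h j) = tau)"

(* strict / non-strict order on monic signatures sigma e_j, represented as (sigma, j) *)
definition sig_less :: "('v mon \<Rightarrow> 'v mon \<Rightarrow> bool) \<Rightarrow> 'v mon \<times> nat \<Rightarrow> 'v mon \<times> nat \<Rightarrow> bool" where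
  "sig_less ord a b \<longleftrightarrow> snd a < snd b \<or> (snd a = snd b \<and> ord (fst a) (fst b) \<and> fst a \<noteq> fst b)"

definition sig_le :: "('v mon \<Rightarrow> 'v mon \<Rightarrow> bool) \<Rightarrow> 'v mon \<times> nat \<Rightarrow> 'v mon \<times> nat \<Rightarrow> bool" where
  "sig_le ord a b \<longleftrightarrow> sig_less ord a b \<or> a = b"

definition is_minsig :: "('v mon \<Rightarrow> 'v mon \<Rightarrow> bool) \<Rightarrow> (nat \<Rightarrow> ('v, 'k::field) mpoly) \<Rightarrow> nat
     \<Rightarrow> 'v mon \<Rightarrow> nat \<Rightarrow> ('v, 'k) mpoly \<Rightarrow> bool" where
  "is_minsig ord f m tau j p \<longleftrightarrow> is_sig ord f m 1 tau j p \<and>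
     (\<forall>tau' j'. is_sig ord f m 1 tau' j' p \<longrightarrow> sig_le ord (tau, j) (tau', j'))"

(* Elements of G are tuples (c, sigma, j, g) standing for the pair (c sigma e_j, g). *)
definition gc :: "'k \<times> 'v mon \<times> nat \<times> ('v, 'k) mpoly \<Rightarrow> 'k" where "gc x = fst x"
definition gsig :: "'k \<times> 'v mon \<times> nat \<times> ('v, 'k) mpoly \<Rightarrow> 'v mon" where "gsig x = fst (snd x)"
definition gidx :: "'k \<times> 'v mon \<times> nat \<times> ('v, 'k) mpoly \<Rightarrow> nat" where "gidx x = fst (snd (snd x))"
definition gpoly :: "'k \<times> 'v mon \<times> nat \<times> ('v, 'k) mpoly \<Rightarrow> ('v, 'k) mpoly" where "gpoly x = snd (snd (snd x))"

(* (c sigma e_m, s) has a signature standard representation w.r.t. G (m = i+1);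
   the tuple (h_1,...,h_N) is indexed by the elements of G.
   minsig(g_k) is the stored signature (gsig, gidx), as assumed for G. *)
definition sig_std_rep :: "('v mon \<Rightarrow> 'v mon \<Rightarrow> bool) \<Rightarrow> (nat \<Rightarrow> ('v, 'k::field) mpoly) \<Rightarrow> nat
     \<Rightarrow> ('k \<times> 'v mon \<times> nat \<times> ('v, 'k) mpoly) set \<Rightarrow> 'k \<Rightarrow> 'v mon \<Rightarrow> ('v, 'k) mpoly \<Rightarrow> bool" where
  "sig_std_rep ord f m G c sigma s \<longleftrightarrow> is_sig ord f m c sigma m s \<and>
     (\<exists>h. s = (\<Sum>x\<in>G. h x * gpoly x) \<and>
          (\<forall>x\<in>G. h x = 0 \<or>
             (ord (lm ord (h x) + lm ord (gpoly x)) (lm ord s) \<and>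
              sig_le ord (lm ord (h x) + gsig x, gidx x) (sigma, m))))"

end

theory Submission imports Defs begin



locale mo = fixes ord :: "'v::finite mon \<Rightarrow> 'v mon \<Rightarrow> bool"
  assumes ord: "deg_mon_order ord"
begin

lemma refl[simp]: "ord s s" using ord unfolding deg_mon_order_def by blast
lemma antisym: "ord s t \<Longrightarrow> ord t s \<Longrightarrow> s = t" using ord unfolding deg_mon_order_def by blast
lemma trans: "ord s t \<Longrightarrow> ord t u \<Longrightarrow> ord s u" using ord unfolding deg_mon_order_def by blast
lemma total: "ord s t \<or> ord t s" using ord unfolding deg_mon_order_def by blast
lemma zero_min[simp]: "ord 0 t" using ord unfolding deg_mon_order_def by blast
lemma add_right: "ord s t \<Longrightarrow> ord (s + u) (t + u)" using ord unfolding deg_mon_order_def by blast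
lemma add_left: "ord s t \<Longrightarrow> ord (u + s) (u + t)" using add_right by (simp add: add.commute)
lemma deg: "mdeg s < mdeg t \<Longrightarrow> ord s t \<and> s \<noteq> t" using ord unfolding deg_mon_order_def by blast

lemma not_le: "\<not> ord s t \<longleftrightarrow> ord t s \<and> t \<noteq> s"
  using total antisym refl by metis

lemma add_cancel_right: "ord (s + u) (t + u) \<Longrightarrow> ord s t"
  by (metis add_right add_right_cancel antisym not_le)
lemma add_cancel_left: "ord (u + s) (u + t) \<Longrightarrow> ord s t"
  using add_cancel_right by (simp add: add.commute)
lemma add_mono: "ord s t \<Longrightarrow> ord u v \<Longrightarrow> ord (s + u) (t + v)"
  by (meson add_left add_right trans)
lemma add_strict_left: "ord s t \<Longrightarrow> s \<noteq> t \<Longrightarrow> ord (u + s) (u + t) \<and> u + s \<noteq> u + t"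
  using add_left by auto
lemma add_strict_right: "ord s t \<Longrightarrow> s \<noteq> t \<Longrightarrow> ord (s + u) (t + u) \<and> s + u \<noteq> t + u"
  using add_right by auto
lemma le_add: "ord s (s + u)"
  using add_left[of 0 u s] by simp

lemma lookup_le_mdeg: "Poly_Mapping.lookup s x \<le> mdeg s"
proof (cases "x \<in> Poly_Mapping.keys s")
  case True
  then show ?thesis unfolding mdeg_def
    by (metis finite_keys member_le_sum zero_le)
next
  case False then show ?thesis by (simp add: in_keys_iff)
qed

lemma finite_deg_le: "finite {s::'v mon. mdeg s \<le> n}"
proof -
  have fin: "finite {h::'v \<Rightarrow> nat. \<forall>x. (x \<in> UNIV \<longrightarrow> h x \<in> {..n}) \<and> (x \<notin> UNIV \<longrightarrow> h x = 0)}"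
    by (rule finite_set_of_finite_funs) auto
  have "Poly_Mapping.lookup ` {s::'v mon. mdeg s \<le> n} \<subseteq> {h::'v \<Rightarrow> nat. \<forall>x. (x \<in> UNIV \<longrightarrow> h x \<in> {..n}) \<and> (x \<notin> UNIV \<longrightarrow> h x = 0)}"
    using lookup_le_mdeg le_trans by fastforce
  then have "finite (Poly_Mapping.lookup ` {s::'v mon. mdeg s \<le> n})" using fin finite_subset by blast
  moreover have "inj_on Poly_Mapping.lookup {s::'v mon. mdeg s \<le> n}"
    by (rule inj_onI, rule poly_mapping_eqI) simp
  ultimately show ?thesis using finite_imageD by blast
qed

lemma finite_below: "finite {r. ord r t}"
proof -
  have "{r. ord r t} \<subseteq> {s. mdeg s \<le> mdeg t}"
    using deg antisym by (fastforce simp: not_le[symmetric] not_less)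
  then show ?thesis using finite_deg_le finite_subset by blast
qed

definition rank :: "'v mon \<Rightarrow> nat" where "rank t = card {r. ord r t \<and> r \<noteq> t}"

lemma wf_lt: "wf {(s, t). ord s t \<and> s \<noteq> t}"
proof (rule wf_subset[OF wf_measure[of rank]])
  show "{(s, t). ord s t \<and> s \<noteq> t} \<subseteq> measure rank"
  proof clarify
    fix s t assume st: "ord s t" "s \<noteq> t"
    have "{r. ord r s \<and> r \<noteq> s} \<subset> {r. ord r t \<and> r \<noteq> t}"
      using st trans antisym by blast
    moreover have "finite {r. ord r t \<and> r \<noteq> t}" using finite_below finite_subset by fastforce
    ultimately show "(s, t) \<in> measure rank" unfolding rank_def by (simp add: psubset_card_mono)
  qed
qed

lemma lt_induct: "(\<And>t. (\<And>s. ord s t \<Longrightarrow> s \<noteq> t \<Longrightarrow> P s) \<Longrightarrow> P t) \<Longrightarrow> P t"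
  by (rule wf_induct[OF wf_lt]) auto

lemma ex_max: "finite A \<Longrightarrow> A \<noteq> {} \<Longrightarrow> \<exists>t\<in>A. \<forall>s\<in>A. ord s t"
proof (induction A rule: finite_ne_induct)
  case (singleton x) then show ?case by simp
next
  case (insert x F)
  then obtain t where "t \<in> F" "\<forall>s\<in>F. ord s t" by blast
  then show ?case using total trans by (metis insert_iff)
qed

lemma ex_min_fun: "finite A \<Longrightarrow> A \<noteq> {} \<Longrightarrow> \<exists>a\<in>A. \<forall>b\<in>A. ord (\<phi> a) (\<phi> b)"
proof (induction A rule: finite_ne_induct)
  case (singleton x) then show ?case by simp
next
  case (insert x F)
  then obtain t where "t \<in> F" "\<forall>s\<in>F. ord (\<phi> t) (\<phi> s)" by blast
  then show ?case using total trans by (metis insert_iff)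
qed

end



context mo begin

lemma lm_ex: "(p::('v,'k::zero) mpoly) \<noteq> 0 \<Longrightarrow> \<exists>t\<in>Poly_Mapping.keys p. \<forall>s\<in>Poly_Mapping.keys p. ord s t"
  by (rule ex_max) auto

lemma lm_prop: assumes "(p::('v,'k::zero) mpoly) \<noteq> 0"
  shows "lm ord p \<in> Poly_Mapping.keys p \<and> (\<forall>s\<in>Poly_Mapping.keys p. ord s (lm ord p))"
proof -
  obtain t where t: "t\<in>Poly_Mapping.keys p" "\<forall>s\<in>Poly_Mapping.keys p. ord s t" using lm_ex[OF assms] by blast
  have "(THE t. t \<in> Poly_Mapping.keys p \<and> (\<forall>s\<in>Poly_Mapping.keys p. ord s t)) = t"
    by (rule the_equality) (use t antisym in blast)+
  then show ?thesis using assms t unfolding lm_def by simp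
qed

lemma lm_in: "(p::('v,'k::zero) mpoly) \<noteq> 0 \<Longrightarrow> lm ord p \<in> Poly_Mapping.keys p" using lm_prop by blast
lemma keys_le_lm: "s \<in> Poly_Mapping.keys (p::('v,'k::zero) mpoly) \<Longrightarrow> ord s (lm ord p)"
  using lm_prop[of p] by (cases "p = 0") auto
lemma lc_nz: "(p::('v,'k::zero) mpoly) \<noteq> 0 \<Longrightarrow> lc ord p \<noteq> 0"
  using lm_in unfolding lc_def by (simp add: in_keys_iff)
lemma lm_eqI: "t \<in> Poly_Mapping.keys (p::('v,'k::zero) mpoly) \<Longrightarrow> \<forall>s\<in>Poly_Mapping.keys p. ord s t \<Longrightarrow> lm ord p = t"
  by (metis antisym empty_iff keys_le_lm keys_zero lm_in)
lemma lm_zero[simp]: "lm ord 0 = 0" unfolding lm_def by simp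

lemma lm_le_iff: "(p::('v,'k::zero) mpoly) \<noteq> 0 \<Longrightarrow> ord (lm ord p) T \<longleftrightarrow> (\<forall>s\<in>Poly_Mapping.keys p. ord s T)"
  using lm_in keys_le_lm trans by blast
lemma lm_lt_iff: "(p::('v,'k::zero) mpoly) \<noteq> 0 \<Longrightarrow> (ord (lm ord p) T \<and> lm ord p \<noteq> T) \<longleftrightarrow> (\<forall>s\<in>Poly_Mapping.keys p. ord s T \<and> s \<noteq> T)"
  using lm_in keys_le_lm trans antisym by metis

lemma lookup_single_mult: "Poly_Mapping.lookup (Poly_Mapping.single t c * (q::('v,'k::field) mpoly)) (t + s) = c * Poly_Mapping.lookup q s"
proof -
  have "Poly_Mapping.lookup (Poly_Mapping.single t c * q) (t + s)
     = (\<Sum>l. Poly_Mapping.lookup (Poly_Mapping.single t c) l * (\<Sum>qa. Poly_Mapping.lookup q qa when t + s = l + qa))"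
    by (rule lookup_mult)
  also have "\<dots> = (\<Sum>l. (c when t = l) * (\<Sum>qa. Poly_Mapping.lookup q qa when t + s = l + qa))"
    by (simp add: lookup_single)
  also have "\<dots> = (\<Sum>l. ((c * (\<Sum>qa. Poly_Mapping.lookup q qa when t + s = l + qa)) when t = l))"
    by (simp add: when_mult)
  also have "\<dots> = c * (\<Sum>qa. Poly_Mapping.lookup q qa when t + s = t + qa)"
    by simp
  also have "\<dots> = c * Poly_Mapping.lookup q s" by simp
  finally show ?thesis .
qed

lemma keys_tmul: "Poly_Mapping.keys (tmul c t (q::('v,'k::field) mpoly)) \<subseteq> (\<lambda>s. t + s) ` Poly_Mapping.keys q"
  unfolding tmul_def using keys_mult[of "Poly_Mapping.single t c" q] by (fastforce split: if_splits)

lemma lookup_tmul: "Poly_Mapping.lookup (tmul c t (q::('v,'k::field) mpoly)) (t + s) = c * Poly_Mapping.lookup q s"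
  unfolding tmul_def by (rule lookup_single_mult)

lemma tmul_nz: "c \<noteq> 0 \<Longrightarrow> (q::('v,'k::field) mpoly) \<noteq> 0 \<Longrightarrow> tmul c t q \<noteq> 0 \<and> lm ord (tmul c t q) = t + lm ord q \<and> lc ord (tmul c t q) = c * lc ord q"
proof -
  assume c: "c \<noteq> 0" and q: "q \<noteq> 0"
  have l: "Poly_Mapping.lookup (tmul c t q) (t + lm ord q) = c * lc ord q"
    by (simp add: lookup_tmul lc_def)
  then have k: "t + lm ord q \<in> Poly_Mapping.keys (tmul c t q)" using c lc_nz[OF q] by (simp add: in_keys_iff)
  have "lm ord (tmul c t q) = t + lm ord q"
    by (rule lm_eqI[OF k]) (use keys_tmul keys_le_lm add_left in blast)
  then show ?thesis using k l unfolding lc_def by auto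
qed

lemma tmul_zero[simp]: "tmul c t 0 = 0" "tmul 0 t q = 0" unfolding tmul_def by simp_all

lemma tmul_add: "tmul c t (p + q) = tmul c t p + tmul c t q" unfolding tmul_def by (simp add: distrib_left)
lemma tmul_diff: "tmul c t (p - q) = tmul c t p - tmul c t (q::('v,'k::field) mpoly)" unfolding tmul_def by (simp add: right_diff_distrib)
lemma tmul_tmul: "tmul c t (tmul d s q) = tmul (c * d) (t + s) (q::('v,'k::field) mpoly)"
  unfolding tmul_def by (simp add: mult.assoc[symmetric] mult_single)
lemma tmul_mult: "tmul c t (p * q) = tmul c t p * (q::('v,'k::field) mpoly)"
  unfolding tmul_def by (simp add: mult.assoc)
lemma tmul_1_0[simp]: "tmul 1 0 q = (q::('v,'k::field) mpoly)" unfolding tmul_def by simp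

lemma keys_mult_le: "s \<in> Poly_Mapping.keys (a * (b::('v,'k::field) mpoly)) \<Longrightarrow> a \<noteq> 0 \<and> b \<noteq> 0 \<and> ord s (lm ord a + lm ord b)"
proof -
  assume "s \<in> Poly_Mapping.keys (a * b)"
  then obtain x y where "s = x + y" "x \<in> Poly_Mapping.keys a" "y \<in> Poly_Mapping.keys b" using keys_mult by blast
  moreover have "ord (x + y) (lm ord a + lm ord b)" using add_mono[OF keys_le_lm keys_le_lm] \<open>x \<in> _\<close> \<open>y \<in> _\<close> by blast
  ultimately show ?thesis by auto
qed

lemma diff_lt: assumes "\<forall>s\<in>Poly_Mapping.keys (p::('v,'k::field) mpoly). ord s T"
  "\<forall>s\<in>Poly_Mapping.keys q. ord s T" "Poly_Mapping.lookup p T = Poly_Mapping.lookup q T"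
  shows "\<forall>s\<in>Poly_Mapping.keys (p - q). ord s T \<and> s \<noteq> T"
  using assms keys_diff[of p q] by (auto simp: in_keys_iff lookup_minus)

lemma lm_sum_attained: assumes "finite A" "(q::('v,'k::field) mpoly) = (\<Sum>x\<in>A. P x)" "q \<noteq> 0"
  shows "\<exists>x\<in>A. lm ord q \<in> Poly_Mapping.keys (P x)"
proof -
  have "Poly_Mapping.lookup q (lm ord q) \<noteq> 0" using lm_in[OF assms(3)] by (simp add: in_keys_iff)
  then have "(\<Sum>x\<in>A. Poly_Mapping.lookup (P x) (lm ord q)) \<noteq> 0" using assms(2) by (simp add: lookup_sum)
  then obtain x where "x \<in> A" "Poly_Mapping.lookup (P x) (lm ord q) \<noteq> 0"
    using sum.not_neutral_contains_not_neutral by blast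
  then show ?thesis by (auto simp: in_keys_iff)
qed

lemma lm_add_max: assumes "(p::('v,'k::field) mpoly) \<noteq> 0" "q \<noteq> 0" "lm ord p \<noteq> lm ord q"
  shows "ord (lm ord p) (lm ord (p + q)) \<and> ord (lm ord q) (lm ord (p + q))"
proof (cases "ord (lm ord p) (lm ord q)")
  case True
  then have lt: "ord (lm ord p) (lm ord q)" by simp
  have "Poly_Mapping.lookup p (lm ord q) = 0"
    using assms lt keys_le_lm antisym by (metis in_keys_iff)
  then have k: "lm ord q \<in> Poly_Mapping.keys (p + q)" using lm_in[OF assms(2)] by (simp add: in_keys_iff lookup_add)
  have "lm ord (p + q) = lm ord q"
    by (rule lm_eqI[OF k]) (use keys_add[of p q] keys_le_lm trans lt in blast)
  then show ?thesis using lt by simp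
next
  case False
  then have lt: "ord (lm ord q) (lm ord p)" using total by blast
  have "Poly_Mapping.lookup q (lm ord p) = 0"
    using assms lt keys_le_lm antisym by (metis in_keys_iff)
  then have k: "lm ord p \<in> Poly_Mapping.keys (p + q)" using lm_in[OF assms(1)] by (simp add: in_keys_iff lookup_add)
  have "lm ord (p + q) = lm ord p"
    by (rule lm_eqI[OF k]) (use keys_add[of p q] keys_le_lm trans lt in blast)
  then show ?thesis using lt by simp
qed

lemma lookup_mlcm: "Poly_Mapping.lookup (mlcm s t) x = max (Poly_Mapping.lookup s x) (Poly_Mapping.lookup (t::'v mon) x)"
  unfolding mlcm_def by (subst lookup_Abs_poly_mapping) auto

lemma mdvd_iff: "mdvd s (t::'v mon) \<longleftrightarrow> (\<forall>x. Poly_Mapping.lookup s x \<le> Poly_Mapping.lookup t x)"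
proof
  assume "mdvd s t" then show "\<forall>x. Poly_Mapping.lookup s x \<le> Poly_Mapping.lookup t x"
    unfolding mdvd_def by (auto simp: lookup_add)
next
  assume a: "\<forall>x. Poly_Mapping.lookup s x \<le> Poly_Mapping.lookup t x"
  let ?u = "Abs_poly_mapping (\<lambda>x. Poly_Mapping.lookup t x - Poly_Mapping.lookup s x) :: 'v mon"
  have "t = s + ?u"
    by (rule poly_mapping_eqI) (use a in \<open>simp add: lookup_add\<close>)
  then show "mdvd s t" unfolding mdvd_def by blast
qed

lemma mdvd_lcm1: "mdvd s (mlcm s (t::'v mon))" by (simp add: mdvd_iff lookup_mlcm)
lemma mdvd_lcm2: "mdvd t (mlcm s (t::'v mon))" by (simp add: mdvd_iff lookup_mlcm)
lemma lcm_mdvd: "mdvd s L \<Longrightarrow> mdvd t L \<Longrightarrow> mdvd (mlcm s (t::'v mon)) L" by (simp add: mdvd_iff lookup_mlcm)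
lemma mdvd_diff: "mdvd s (t::'v mon) \<Longrightarrow> t = s + (t - s)" unfolding mdvd_def by auto
lemma mdvd_plus: "mdvd s (s + (u::'v mon))" unfolding mdvd_def by auto

lemma sl_def2: "sig_less ord (a, j) (b, k) \<longleftrightarrow> j < k \<or> (j = k \<and> ord a b \<and> a \<noteq> b)"
  unfolding sig_less_def by simp
lemma sl_irrefl: "\<not> sig_less ord x x" unfolding sig_less_def by auto
lemma sl_trans: "sig_less ord x y \<Longrightarrow> sig_less ord y z \<Longrightarrow> sig_less ord x z"
proof -
  assume a: "sig_less ord x y" "sig_less ord y z"
  show ?thesis using a unfolding sig_less_def
  proof (elim disjE conjE)
    assume "snd x = snd y" "ord (fst x) (fst y)" "fst x \<noteq> fst y" "snd y = snd z" "ord (fst y) (fst z)" "fst y \<noteq> fst z"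
    then show "snd x < snd z \<or> snd x = snd z \<and> ord (fst x) (fst z) \<and> fst x \<noteq> fst z"
      using trans antisym by metis
  qed auto
qed
lemma sle_sl_trans: "sig_le ord x y \<Longrightarrow> sig_less ord y z \<Longrightarrow> sig_less ord x z"
  unfolding sig_le_def using sl_trans by blast
lemma sl_sle_trans: "sig_less ord x y \<Longrightarrow> sig_le ord y z \<Longrightarrow> sig_less ord x z"
  unfolding sig_le_def using sl_trans by blast
lemma sle_antisym: "sig_le ord x y \<Longrightarrow> sig_le ord y x \<Longrightarrow> x = y"
  unfolding sig_le_def using sl_trans sl_irrefl by blast
lemma sl_cancel: "sig_less ord (m + a, j) (m + b, k) \<Longrightarrow> sig_less ord (a, j) (b, k)"
  unfolding sl_def2 using add_cancel_left by blast

end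



locale setting = mo ord for ord :: "'v::finite mon \<Rightarrow> 'v mon \<Rightarrow> bool" +
  fixes f :: "nat \<Rightarrow> ('v, 'k::field) mpoly"
    and i M l :: nat
    and g :: "nat \<Rightarrow> ('v, 'k) mpoly" and sg :: "nat \<Rightarrow> 'v mon" and jg :: "nat \<Rightarrow> nat"
    and p :: "nat \<Rightarrow> ('v, 'k) mpoly" and d :: "nat \<Rightarrow> 'k" and tau :: "nat \<Rightarrow> 'v mon"
    and G :: "('k \<times> 'v mon \<times> nat \<times> ('v, 'k) mpoly) set"
  assumes notin: "f (i + 1) \<notin> gen_ideal f i"
    and g_in: "\<forall>k<M. g k \<in> gen_ideal f i"
    and g_GB: "is_GB ord {g k | k. k < M} (gen_ideal f i)"
    and p_in: "\<forall>k<l. p k \<in> gen_ideal f (i + 1) \<and> p k \<noteq> 0"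
    and d_nz: "\<forall>k<l. d k \<noteq> 0"
    and jg_le: "\<forall>k<M. jg k \<le> i"
    and G_def: "G = {(1, sg k, jg k, g k) | k. k < M}
                  \<union> {(1, 0, i + 1, f (i + 1))}
                  \<union> {(d k, tau k, i + 1, p k) | k. k < l}"
    and G_sig: "\<forall>x\<in>G. is_sig ord f (i + 1) (gc x) (gsig x) (gidx x) (gpoly x)
                     \<and> is_minsig ord f (i + 1) (gsig x) (gidx x) (gpoly x)"
    and pairs: "\<forall>x\<in>G. \<forall>y\<in>G. gidx x = i + 1 \<and> gpoly x \<noteq> gpoly y \<longrightarrow>
        (let t = mlcm (lm ord (gpoly x)) (lm ord (gpoly y));
             u = t - lm ord (gpoly x); v = t - lm ord (gpoly y)
         in sig_le ord (v + gsig y, gidx y) (u + gsig x, i + 1) \<longrightarrow>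
            ((gidx y = i + 1 \<and> u + gsig x = v + gsig y) \<or>
             (sig_less ord (v + gsig y, gidx y) (u + gsig x, i + 1) \<and>
              sig_std_rep ord f (i + 1) G (gc x) (u + gsig x) (spoly ord (gpoly x) (gpoly y)))))"
begin

abbreviation "II \<equiv> gen_ideal f i"
abbreviation "F \<equiv> f (i + 1)"

lemma II_zero[simp]: "0 \<in> gen_ideal f j"
  unfolding gen_ideal_def by (rule CollectI, rule exI[of _ "\<lambda>_. 0"]) simp

lemma II_add: "a \<in> gen_ideal f j \<Longrightarrow> b \<in> gen_ideal f j \<Longrightarrow> a + b \<in> gen_ideal f j"
  unfolding gen_ideal_def
proof clarify
  fix h h' show "\<exists>h''. (\<Sum>k = 1..j. h k * f k) + (\<Sum>k = 1..j. h' k * f k) = (\<Sum>k = 1..j. h'' k * f k)"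
    by (rule exI[of _ "\<lambda>k. h k + h' k"]) (simp add: sum.distrib distrib_right)
qed

lemma II_mult: "a \<in> gen_ideal f j \<Longrightarrow> r * a \<in> gen_ideal f j"
  unfolding gen_ideal_def
proof clarify
  fix h show "\<exists>h''. r * (\<Sum>k = 1..j. h k * f k) = (\<Sum>k = 1..j. h'' k * f k)"
    by (rule exI[of _ "\<lambda>k. r * h k"]) (simp add: sum_distrib_left mult.assoc)
qed

lemma II_neg: "a \<in> gen_ideal f j \<Longrightarrow> - a \<in> gen_ideal f j"
  using II_mult[of a j "-1"] by simp

lemma II_diff: "a \<in> gen_ideal f j \<Longrightarrow> b \<in> gen_ideal f j \<Longrightarrow> a - b \<in> gen_ideal f j"
  using II_add II_neg by (metis diff_conv_add_uminus)

lemma II_tmul: "a \<in> gen_ideal f j \<Longrightarrow> tmul c t a \<in> gen_ideal f j"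
  unfolding tmul_def by (rule II_mult)

lemma II_sum: "finite A \<Longrightarrow> (\<And>x. x \<in> A \<Longrightarrow> P x \<in> gen_ideal f j) \<Longrightarrow> (\<Sum>x\<in>A. P x) \<in> gen_ideal f j"
  by (induction A rule: finite_induct) (auto intro: II_add)

lemma sum_split: "(\<Sum>k = 1..i + 1. h k * f k) = (\<Sum>k = 1..i. h k * f k) + h (i+1) * F"
  by simp

lemma II_sub: "gen_ideal f i \<subseteq> gen_ideal f (i + 1)"
proof
  fix a assume "a \<in> II"
  then obtain h where h: "a = (\<Sum>k = 1..i. h k * f k)" unfolding gen_ideal_def by blast
  have "a = (\<Sum>k = 1..i+1. (h(i+1 := 0)) k * f k)" unfolding sum_split h by simp
  then show "a \<in> gen_ideal f (i + 1)" unfolding gen_ideal_def by blast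
qed

lemma F_in: "F \<in> gen_ideal f (i + 1)"
proof -
  have "F = (\<Sum>k = 1..i+1. ((\<lambda>_. 0)(i+1 := 1)) k * f k)" unfolding sum_split by simp
  then show ?thesis unfolding gen_ideal_def by blast
qed

lemma I1_split: "q \<in> gen_ideal f (i + 1) \<Longrightarrow> \<exists>a h. a \<in> II \<and> q = a + h * F"
  unfolding gen_ideal_def sum_split by blast

lemma F_nz: "F \<noteq> 0" using notin by auto

lemma finG: "finite G" unfolding G_def by auto

definition e where "e = ((1::'k), (0::'v mon), i + 1, F)"
lemma e_in: "e \<in> G" unfolding G_def e_def by blast
lemma e_simps[simp]: "gsig e = 0" "gidx e = i + 1" "gpoly e = F" "gc e = 1"
  unfolding e_def gsig_def gidx_def gpoly_def gc_def by simp_all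

lemma G_cases: "x \<in> G \<Longrightarrow> (gidx x \<le> i \<and> gpoly x \<in> II) \<or> (gidx x = i + 1 \<and> gpoly x \<noteq> 0)"
  using jg_le g_in p_in F_nz unfolding G_def gidx_def gpoly_def by auto

lemma G_low: "x \<in> G \<Longrightarrow> gidx x \<le> i \<Longrightarrow> gpoly x \<in> II" using G_cases by fastforce
lemma G_high_nz: "x \<in> G \<Longrightarrow> gidx x = i + 1 \<Longrightarrow> gpoly x \<noteq> 0" using G_cases by fastforce
lemma G_idx: "x \<in> G \<Longrightarrow> gidx x \<le> i + 1" using G_cases by fastforce

lemma G_high_rep: assumes "x \<in> G" "gidx x = i + 1"
  shows "\<exists>a H. a \<in> II \<and> gpoly x = a + H * F \<and> H \<noteq> 0 \<and> lm ord H = gsig x \<and> lc ord H = gc x"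
proof -
  have "is_sig ord f (i + 1) (gc x) (gsig x) (gidx x) (gpoly x)" using G_sig assms by blast
  then obtain h where h: "gpoly x = (\<Sum>k = 1..i+1. h k * f k)" "h (i+1) \<noteq> 0"
    "lc ord (h (i+1)) = gc x" "lm ord (h (i+1)) = gsig x"
    unfolding is_sig_def using assms(2) by auto
  have "(\<Sum>k = 1..i. h k * f k) \<in> II" unfolding gen_ideal_def by blast
  then show ?thesis using h unfolding sum_split by blast
qed

lemma G_gc_nz: "x \<in> G \<Longrightarrow> gidx x = i + 1 \<Longrightarrow> gc x \<noteq> 0"
  using G_high_rep lc_nz by metis

lemma minsig_unique: assumes "x \<in> G" "y \<in> G" "gpoly x = gpoly y"
  shows "gsig x = gsig y \<and> gidx x = gidx y"
proof -
  have mx: "is_minsig ord f (i + 1) (gsig x) (gidx x) (gpoly x)" and my: "is_minsig ord f (i + 1) (gsig y) (gidx y) (gpoly y)"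
    using G_sig assms by auto
  have "sig_le ord (gsig x, gidx x) (gsig y, gidx y)" using mx my assms(3) unfolding is_minsig_def by auto
  moreover have "sig_le ord (gsig y, gidx y) (gsig x, gidx x)" using mx my assms(3) unfolding is_minsig_def by auto
  ultimately show ?thesis using sle_antisym by blast
qed

end



context setting begin

definition inB :: "'v mon \<Rightarrow> ('v,'k) mpoly \<Rightarrow> bool" where
  "inB \<mu> q \<longleftrightarrow> (\<exists>a h. a \<in> II \<and> q = a + h * F \<and> (\<forall>s\<in>Poly_Mapping.keys h. ord s \<mu>))"
definition inBlt :: "'v mon \<Rightarrow> ('v,'k) mpoly \<Rightarrow> bool" where
  "inBlt \<mu> q \<longleftrightarrow> (\<exists>a h. a \<in> II \<and> q = a + h * F \<and> (\<forall>s\<in>Poly_Mapping.keys h. ord s \<mu> \<and> s \<noteq> \<mu>))"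
definition REP :: "('v mon \<times> nat \<Rightarrow> bool) \<Rightarrow> ('v,'k) mpoly \<Rightarrow> bool" where
  "REP P q \<longleftrightarrow> (\<exists>h. q = (\<Sum>x\<in>G. h x * gpoly x) \<and>
     (\<forall>x\<in>G. h x = 0 \<or> (ord (lm ord (h x) + lm ord (gpoly x)) (lm ord q) \<and> P (lm ord (h x) + gsig x, gidx x))))"

lemma REP_mono: "REP P q \<Longrightarrow> (\<And>\<sigma>. P \<sigma> \<Longrightarrow> Q \<sigma>) \<Longrightarrow> REP Q q"
  unfolding REP_def by blast

lemma inBlt_II: "a \<in> II \<Longrightarrow> inBlt \<nu> a"
  unfolding inBlt_def by (rule exI[of _ a], rule exI[of _ 0]) simp

lemma inBlt_add: "inBlt \<nu> q \<Longrightarrow> inBlt \<nu> q' \<Longrightarrow> inBlt \<nu> (q + q')"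
proof -
  assume "inBlt \<nu> q" "inBlt \<nu> q'"
  then obtain a h a' h' where A: "a \<in> II" "q = a + h * F" "\<forall>s\<in>Poly_Mapping.keys h. ord s \<nu> \<and> s \<noteq> \<nu>"
    "a' \<in> II" "q' = a' + h' * F" "\<forall>s\<in>Poly_Mapping.keys h'. ord s \<nu> \<and> s \<noteq> \<nu>"
    unfolding inBlt_def by blast
  have "q + q' = (a + a') + (h + h') * F" by (simp only: A(2) A(5)) (simp add: algebra_simps)
  moreover have "\<forall>s\<in>Poly_Mapping.keys (h + h'). ord s \<nu> \<and> s \<noteq> \<nu>" using A keys_add[of h h'] by blast
  ultimately show ?thesis using II_add[OF A(1) A(4)] unfolding inBlt_def by blast
qed

lemma inBlt_tmul: "inBlt \<nu> q \<Longrightarrow> inBlt (t + \<nu>) (tmul c t q)"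
proof -
  assume "inBlt \<nu> q"
  then obtain a h where A: "a \<in> II" "q = a + h * F" "\<forall>s\<in>Poly_Mapping.keys h. ord s \<nu> \<and> s \<noteq> \<nu>"
    unfolding inBlt_def by blast
  have "tmul c t q = tmul c t a + tmul c t h * F" by (simp only: A(2) tmul_add tmul_mult)
  moreover have "\<forall>s\<in>Poly_Mapping.keys (tmul c t h). ord s (t + \<nu>) \<and> s \<noteq> t + \<nu>"
  proof
    fix s assume "s \<in> Poly_Mapping.keys (tmul c t h)"
    then obtain s' where "s = t + s'" "s' \<in> Poly_Mapping.keys h" using keys_tmul[of c t h] by blast
    moreover have "ord s' \<nu>" "s' \<noteq> \<nu>" using A(3) \<open>s' \<in> _\<close> by auto
    ultimately show "ord s (t + \<nu>) \<and> s \<noteq> t + \<nu>" using add_strict_left[of s' \<nu> t] by simp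
  qed
  ultimately show ?thesis using II_tmul[OF A(1)] unfolding inBlt_def by blast
qed

lemma inBlt_scale: "inBlt \<nu> q \<Longrightarrow> inBlt \<nu> (tmul c 0 q)"
  using inBlt_tmul[of \<nu> q 0 c] by simp

lemma inBlt_zero: "inBlt \<nu> 0" using inBlt_II by simp

lemma inBlt_sum: "finite A \<Longrightarrow> (\<And>x. x \<in> A \<Longrightarrow> inBlt \<nu> (P x)) \<Longrightarrow> inBlt \<nu> (\<Sum>x\<in>A. P x)"
  by (induction A rule: finite_induct) (auto intro: inBlt_add inBlt_zero)

lemma inBlt_term: assumes "z \<in> G" "hz = 0 \<or> sig_less ord (lm ord hz + gsig z, gidx z) (\<nu>, i + 1)"
  shows "inBlt \<nu> (hz * gpoly z)"
proof (cases "hz = 0")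
  case True then show ?thesis by (simp add: inBlt_zero)
next
  case False
  then have sl: "sig_less ord (lm ord hz + gsig z, gidx z) (\<nu>, i + 1)" using assms by blast
  show ?thesis
  proof (cases "gidx z \<le> i")
    case True
    then show ?thesis using G_low[OF assms(1)] II_mult inBlt_II by blast
  next
    case False
    then have gi: "gidx z = i + 1" using G_idx[OF assms(1)] by simp
    with sl have lt: "ord (lm ord hz + gsig z) \<nu>" "lm ord hz + gsig z \<noteq> \<nu>" unfolding sl_def2 by auto
    obtain a H where aH: "a \<in> II" "gpoly z = a + H * F" "H \<noteq> 0" "lm ord H = gsig z"
      using G_high_rep[OF assms(1) gi] by blast
    have "hz * gpoly z = hz * a + (hz * H) * F" using aH by (simp add: algebra_simps)
    moreover have "\<forall>s\<in>Poly_Mapping.keys (hz * H). ord s \<nu> \<and> s \<noteq> \<nu>"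
    proof
      fix s assume "s \<in> Poly_Mapping.keys (hz * H)"
      then have "ord s (lm ord hz + lm ord H)" using keys_mult_le by blast
      then show "ord s \<nu> \<and> s \<noteq> \<nu>" using lt aH(4) trans antisym by metis
    qed
    ultimately show ?thesis using aH II_mult unfolding inBlt_def by blast
  qed
qed

lemma inBlt_rep: assumes "\<forall>z\<in>G. hz z = 0 \<or> sig_less ord (lm ord (hz z) + gsig z, gidx z) (\<nu>, i + 1)"
  shows "inBlt \<nu> (\<Sum>z\<in>G. hz z * gpoly z)"
  by (rule inBlt_sum[OF finG]) (use assms inBlt_term in blast)

lemma REP_zero: "REP P 0"
  unfolding REP_def by (rule exI[of _ "\<lambda>_. 0"]) simp

lemma division_step: assumes "q \<in> II" "q \<noteq> 0"
  and IH: "\<And>q'. q' \<in> II \<Longrightarrow> q' \<noteq> 0 \<Longrightarrow> ord (lm ord q') (lm ord q) \<Longrightarrow> lm ord q' \<noteq> lm ord q \<Longrightarrow> REP (\<lambda>\<sigma>. snd \<sigma> \<le> i) q'"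
  shows "REP (\<lambda>\<sigma>. snd \<sigma> \<le> i) q"
proof -
  obtain g' where g': "g' \<in> {g k | k. k < M}" "g' \<noteq> 0" "mdvd (lm ord g') (lm ord q)"
    using g_GB assms unfolding is_GB_def by blast
  then obtain k where k: "k < M" "g' = g k" by blast
  define x where "x = ((1::'k), sg k, jg k, g k)"
  have x: "x \<in> G" "gpoly x = g'" "gidx x \<le> i" unfolding x_def G_def using k jg_le by (auto simp: gpoly_def gidx_def)
  define w where "w = lm ord q - lm ord g'"
  have w: "lm ord q = lm ord g' + w" using mdvd_diff[OF g'(3)] w_def by simp
  define \<kappa> where "\<kappa> = lc ord q / lc ord g'"
  have \<kappa>: "\<kappa> \<noteq> 0" using lc_nz[OF assms(2)] lc_nz[OF g'(2)] \<kappa>_def by simp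
  define q' where "q' = q - tmul \<kappa> w g'"
  have q'II: "q' \<in> II" unfolding q'_def using assms(1) g' k g_in II_diff II_tmul by blast
  obtain T where T: "tmul \<kappa> w g' \<noteq> 0" "lm ord (tmul \<kappa> w g') = lm ord q" "lc ord (tmul \<kappa> w g') = lc ord q"
    using tmul_nz[OF \<kappa> g'(2), of w] w \<kappa>_def lc_nz[OF g'(2)] by (simp add: add.commute)
  have keysq': "\<forall>s\<in>Poly_Mapping.keys q'. ord s (lm ord q) \<and> s \<noteq> lm ord q"
    unfolding q'_def
  proof (rule diff_lt)
    show "\<forall>s\<in>Poly_Mapping.keys q. ord s (lm ord q)" using keys_le_lm by blast
    show "\<forall>s\<in>Poly_Mapping.keys (tmul \<kappa> w g'). ord s (lm ord q)" using keys_le_lm[of _ "tmul \<kappa> w g'"] T(2) by simp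
    show "Poly_Mapping.lookup q (lm ord q) = Poly_Mapping.lookup (tmul \<kappa> w g') (lm ord q)"
      using T(2,3) unfolding lc_def by simp
  qed
  have Rq': "REP (\<lambda>\<sigma>. snd \<sigma> \<le> i) q'"
  proof (cases "q' = 0")
    case True then show ?thesis by (simp add: REP_zero)
  next
    case False
    then show ?thesis using IH[OF q'II False] keysq' lm_in[OF False] by blast
  qed
  have lmq': "ord (lm ord q') (lm ord q)"
    using keysq' lm_in by (cases "q' = 0") auto
  obtain h where h: "q' = (\<Sum>x\<in>G. h x * gpoly x)"
    "\<forall>x\<in>G. h x = 0 \<or> (ord (lm ord (h x) + lm ord (gpoly x)) (lm ord q') \<and> snd (lm ord (h x) + gsig x, gidx x) \<le> i)"
    using Rq' unfolding REP_def by blast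
  define h' where "h' = (\<lambda>y. h y + (if y = x then Poly_Mapping.single w \<kappa> else 0))"
  have "q = q' + tmul \<kappa> w g'" unfolding q'_def by simp
  also have "\<dots> = (\<Sum>y\<in>G. h y * gpoly y) + (\<Sum>y\<in>G. (if y = x then Poly_Mapping.single w \<kappa> else 0) * gpoly y)"
  proof -
    have "(\<Sum>y\<in>G. (if y = x then Poly_Mapping.single w \<kappa> else 0) * gpoly y)
        = (\<Sum>y\<in>G. (if y = x then Poly_Mapping.single w \<kappa> * gpoly y else 0))"
      by (rule sum.cong) auto
    also have "\<dots> = tmul \<kappa> w g'" using x finG by (simp add: sum.delta' tmul_def)
    finally show ?thesis using h(1) by simp
  qed
  also have "\<dots> = (\<Sum>y\<in>G. h' y * gpoly y)" unfolding h'_def by (simp add: distrib_right sum.distrib)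
  finally have eq: "q = (\<Sum>y\<in>G. h' y * gpoly y)" .
  have "\<forall>y\<in>G. h' y = 0 \<or> (ord (lm ord (h' y) + lm ord (gpoly y)) (lm ord q) \<and> snd (lm ord (h' y) + gsig y, gidx y) \<le> i)"
  proof
    fix y assume y: "y \<in> G"
    show "h' y = 0 \<or> (ord (lm ord (h' y) + lm ord (gpoly y)) (lm ord q) \<and> snd (lm ord (h' y) + gsig y, gidx y) \<le> i)"
    proof (cases "y = x")
      case False
      then show ?thesis using h(2) y lmq' trans unfolding h'_def by fastforce
    next
      case True
      note yx = True
      show ?thesis
      proof (cases "h' y = 0")
        case True then show ?thesis by simp
      next
        case False
        note nz = False
        have "lm ord (h' y) \<in> Poly_Mapping.keys (h y) \<union> {w}"
          using lm_in[OF nz] keys_add[of "h y" "Poly_Mapping.single w \<kappa>"] yx unfolding h'_def by (auto split: if_splits)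
        then have "ord (lm ord (h' y) + lm ord (gpoly y)) (lm ord q)"
        proof
          assume a: "lm ord (h' y) \<in> Poly_Mapping.keys (h y)"
          then have "h y \<noteq> 0" by auto
          then have "ord (lm ord (h y) + lm ord (gpoly y)) (lm ord q')" using h(2) y by blast
          moreover have "ord (lm ord (h' y) + lm ord (gpoly y)) (lm ord (h y) + lm ord (gpoly y))"
            using add_right keys_le_lm a by blast
          ultimately show ?thesis using lmq' trans by blast
        next
          assume "lm ord (h' y) \<in> {w}"
          then show ?thesis using w yx x by (simp add: add.commute)
        qed
        moreover have "gidx y \<le> i" using yx x by simp
        ultimately show ?thesis by simp
      qed
    qed
  qed
  then show ?thesis using eq unfolding REP_def by blast
qed

lemma division: "q \<in> II \<Longrightarrow> REP (\<lambda>\<sigma>. snd \<sigma> \<le> i) q"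
proof -
  have "\<forall>q. q \<in> II \<longrightarrow> q \<noteq> 0 \<longrightarrow> lm ord q = T \<longrightarrow> REP (\<lambda>\<sigma>. snd \<sigma> \<le> i) q" for T
  proof (induction T rule: lt_induct)
    case (1 T)
    show ?case
    proof (intro allI impI)
      fix q assume "q \<in> II" "q \<noteq> 0" "lm ord q = T"
      then show "REP (\<lambda>\<sigma>. snd \<sigma> \<le> i) q"
        using division_step 1 by blast
    qed
  qed
  then show "q \<in> II \<Longrightarrow> REP (\<lambda>\<sigma>. snd \<sigma> \<le> i) q" using REP_zero by (cases "q = 0") auto
qed

end



context setting begin

lemma sle_of_ord: "ord a b \<Longrightarrow> sig_le ord (a, j) (b, j)"
  unfolding sig_le_def sig_less_def by auto

lemma lm_single: "c \<noteq> 0 \<Longrightarrow> lm ord (Poly_Mapping.single w c :: ('v,'k) mpoly) = w"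
  by (rule lm_eqI) auto

lemma IH_lt: assumes IH: "\<And>\<mu>' s. ord \<mu>' \<mu> \<Longrightarrow> \<mu>' \<noteq> \<mu> \<Longrightarrow> inB \<mu>' s \<Longrightarrow> REP (\<lambda>\<sigma>. sig_le ord \<sigma> (\<mu>', i + 1)) s"
  and q: "inBlt \<mu> q"
  shows "REP (\<lambda>\<sigma>. sig_less ord \<sigma> (\<mu>, i + 1)) q"
proof -
  obtain a h where A: "a \<in> II" "q = a + h * F" "\<forall>s\<in>Poly_Mapping.keys h. ord s \<mu> \<and> s \<noteq> \<mu>"
    using q unfolding inBlt_def by blast
  show ?thesis
  proof (cases "h = 0")
    case True
    then have "q \<in> II" using A by simp
    have "REP (\<lambda>\<sigma>. snd \<sigma> \<le> i) q" using division[OF \<open>q \<in> II\<close>] .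
    moreover have "\<And>\<sigma>. snd \<sigma> \<le> i \<Longrightarrow> sig_less ord \<sigma> (\<mu>, i + 1)"
      unfolding sig_less_def by simp
    ultimately show ?thesis by (rule REP_mono)
  next
    case False
    have lt: "ord (lm ord h) \<mu>" "lm ord h \<noteq> \<mu>" using A(3) lm_in[OF False] by auto
    have "inB (lm ord h) q" unfolding inB_def
      by (rule exI[of _ a], rule exI[of _ h]) (use A(1,2) keys_le_lm in auto)
    then have R: "REP (\<lambda>\<sigma>. sig_le ord \<sigma> (lm ord h, i + 1)) q" by (rule IH[OF lt])
    have sl: "sig_less ord (lm ord h, i + 1) (\<mu>, i + 1)" using lt unfolding sig_less_def by simp
    show ?thesis by (rule REP_mono[OF R]) (rule sle_sl_trans[OF _ sl])
  qed
qed

end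



context setting begin

lemma main_step:
  assumes IHlt: "\<And>q. inBlt \<mu> q \<Longrightarrow> REP (\<lambda>\<sigma>. sig_less ord \<sigma> (\<mu>, i + 1)) q"
    and s: "inB \<mu> s"
  shows "REP (\<lambda>\<sigma>. sig_le ord \<sigma> (\<mu>, i + 1)) s"
proof (cases "inBlt \<mu> s")
  case True
  have "\<And>\<sigma>. sig_less ord \<sigma> (\<mu>, i + 1) \<Longrightarrow> sig_le ord \<sigma> (\<mu>, i + 1)" unfolding sig_le_def by simp
  with IHlt[OF True] show ?thesis by (rule REP_mono)
next
  case notlt: False
  obtain a h where A: "a \<in> II" "s = a + h * F" "\<forall>s\<in>Poly_Mapping.keys h. ord s \<mu>"
    using s unfolding inB_def by blast
  have \<mu>h: "\<mu> \<in> Poly_Mapping.keys h"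
  proof (rule ccontr)
    assume "\<mu> \<notin> Poly_Mapping.keys h"
    then have "\<forall>s\<in>Poly_Mapping.keys h. ord s \<mu> \<and> s \<noteq> \<mu>" using A(3) by blast
    then have "inBlt \<mu> s" unfolding inBlt_def using A(1,2) by blast
    then show False using notlt by blast
  qed
  define c where "c = Poly_Mapping.lookup h \<mu>"
  have c: "c \<noteq> 0" using \<mu>h unfolding c_def by (simp add: in_keys_iff)
  define C where "C = {x\<in>G. gidx x = i + 1 \<and> mdvd (gsig x) \<mu>}"
  have finC: "finite C" unfolding C_def using finG by simp
  have eC: "e \<in> C" unfolding C_def using e_in by (simp add: mdvd_def)
  define Lx where "Lx = (\<lambda>x::'k \<times> 'v mon \<times> nat \<times> ('v,'k) mpoly. (\<mu> - gsig x) + lm ord (gpoly x))"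
  obtain x where x: "x \<in> C" "\<forall>z\<in>C. ord (Lx x) (Lx z)"
    using ex_min_fun[OF finC, of Lx] eC by blast
  have xG: "x \<in> G" and xi: "gidx x = i + 1" and xdvd: "mdvd (gsig x) \<mu>" using x(1) unfolding C_def by auto
  define w where "w = \<mu> - gsig x"
  have \<mu>w: "\<mu> = gsig x + w" using mdvd_diff[OF xdvd] w_def by simp
  define gx where "gx = gpoly x"
  have gx0: "gx \<noteq> 0" using G_high_nz[OF xG xi] gx_def by simp
  obtain ax Hx where aH: "ax \<in> II" "gx = ax + Hx * F" "Hx \<noteq> 0" "lm ord Hx = gsig x" "lc ord Hx = gc x"
    using G_high_rep[OF xG xi] gx_def by blast
  have gcx: "gc x \<noteq> 0" using G_gc_nz[OF xG xi] .
  define k where "k = c / gc x"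
  have k: "k \<noteq> 0" using c gcx k_def by simp
  define T where "T = tmul k w gx"
  have T: "T \<noteq> 0" "lm ord T = w + lm ord gx" using tmul_nz[OF k gx0] T_def by auto
  have LxT: "Lx x = lm ord T" using T w_def Lx_def gx_def by simp
  define r where "r = s - T"
  have sr: "s = r + T" unfolding r_def by simp
  have rBlt: "inBlt \<mu> r"
  proof -
    have "r = (a - tmul k w ax) + (h - tmul k w Hx) * F"
      unfolding r_def T_def by (simp only: A(2) aH(2) tmul_add tmul_mult) (simp add: algebra_simps)
    moreover have "\<forall>s\<in>Poly_Mapping.keys (h - tmul k w Hx). ord s \<mu> \<and> s \<noteq> \<mu>"
    proof (rule diff_lt)
      show "\<forall>s\<in>Poly_Mapping.keys h. ord s \<mu>" using A(3) .
      show "\<forall>s\<in>Poly_Mapping.keys (tmul k w Hx). ord s \<mu>"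
      proof
        fix s assume "s \<in> Poly_Mapping.keys (tmul k w Hx)"
        then obtain s' where "s = w + s'" "s' \<in> Poly_Mapping.keys Hx" using keys_tmul[of k w Hx] by blast
        then have "ord s (w + gsig x)" using keys_le_lm[of s' Hx] aH(4) add_left by metis
        then show "ord s \<mu>" using \<mu>w by (simp add: add.commute)
      qed
      have "Poly_Mapping.lookup (tmul k w Hx) \<mu> = Poly_Mapping.lookup (tmul k w Hx) (w + gsig x)"
        using \<mu>w by (simp add: add.commute)
      also have "\<dots> = k * lc ord Hx" using lookup_tmul aH(4) unfolding lc_def by metis
      also have "\<dots> = c" using aH(5) k_def gcx by simp
      finally show "Poly_Mapping.lookup h \<mu> = Poly_Mapping.lookup (tmul k w Hx) \<mu>" using c_def by simp
    qed
    moreover have "a - tmul k w ax \<in> II" using A(1) aH(1) II_diff II_tmul by blast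
    ultimately show ?thesis unfolding inBlt_def by blast
  qed
  obtain hr where hr: "r = (\<Sum>y\<in>G. hr y * gpoly y)"
    "\<forall>y\<in>G. hr y = 0 \<or> (ord (lm ord (hr y) + lm ord (gpoly y)) (lm ord r) \<and> sig_less ord (lm ord (hr y) + gsig y, gidx y) (\<mu>, i + 1))"
    using IHlt[OF rBlt] unfolding REP_def by blast
  show ?thesis
  proof (cases "r \<noteq> 0 \<and> lm ord r = Lx x")
    case False
    have bounds: "ord (lm ord r) (lm ord s) \<and> ord (Lx x) (lm ord s)"
    proof (cases "r = 0")
      case True then show ?thesis using sr LxT by simp
    next
      case False2: False
      then have "lm ord r \<noteq> lm ord T" using False LxT by simp
      then show ?thesis using lm_add_max[OF False2 T(1)] sr LxT by simp
    qed
    define h' where "h' = (\<lambda>y. hr y + (if y = x then Poly_Mapping.single w k else 0))"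
    have "(\<Sum>y\<in>G. (if y = x then Poly_Mapping.single w k else 0) * gpoly y)
        = (\<Sum>y\<in>G. (if y = x then Poly_Mapping.single w k * gpoly y else 0))"
      by (rule sum.cong) auto
    also have "\<dots> = T" using xG finG by (simp add: sum.delta' tmul_def T_def gx_def)
    finally have "s = (\<Sum>y\<in>G. hr y * gpoly y) + (\<Sum>y\<in>G. (if y = x then Poly_Mapping.single w k else 0) * gpoly y)"
      using sr hr(1) by simp
    also have "\<dots> = (\<Sum>y\<in>G. h' y * gpoly y)" unfolding h'_def by (simp add: distrib_right sum.distrib)
    finally have eq: "s = (\<Sum>y\<in>G. h' y * gpoly y)" .
    have "\<forall>y\<in>G. h' y = 0 \<or> (ord (lm ord (h' y) + lm ord (gpoly y)) (lm ord s) \<and> sig_le ord (lm ord (h' y) + gsig y, gidx y) (\<mu>, i + 1))"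
    proof
      fix y assume y: "y \<in> G"
      show "h' y = 0 \<or> (ord (lm ord (h' y) + lm ord (gpoly y)) (lm ord s) \<and> sig_le ord (lm ord (h' y) + gsig y, gidx y) (\<mu>, i + 1))"
      proof (cases "y = x")
        case False
        then show ?thesis using hr(2) y bounds trans unfolding h'_def sig_le_def by fastforce
      next
        case True
        note yx = True
        show ?thesis
        proof (cases "h' y = 0")
          case True then show ?thesis by simp
        next
          case False
          note nz = False
          have "lm ord (h' y) \<in> Poly_Mapping.keys (hr y) \<union> {w}"
            using lm_in[OF nz] keys_add[of "hr y" "Poly_Mapping.single w k"] yx unfolding h'_def by (auto split: if_splits)
          then have "ord (lm ord (h' y) + lm ord (gpoly y)) (lm ord s) \<and> ord (lm ord (h' y) + gsig y) \<mu>"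
          proof
            assume a: "lm ord (h' y) \<in> Poly_Mapping.keys (hr y)"
            then have "hr y \<noteq> 0" by auto
            then have H: "ord (lm ord (hr y) + lm ord (gpoly y)) (lm ord r)"
              "sig_less ord (lm ord (hr y) + gsig y, gidx y) (\<mu>, i + 1)" using hr(2) y by blast+
            have le: "ord (lm ord (h' y)) (lm ord (hr y))" using keys_le_lm a by blast
            have "ord (lm ord (h' y) + lm ord (gpoly y)) (lm ord (hr y) + lm ord (gpoly y))"
              using add_right le by blast
            then have 1: "ord (lm ord (h' y) + lm ord (gpoly y)) (lm ord s)" using H(1) bounds trans by blast
            have "ord (lm ord (hr y) + gsig y) \<mu>" using H(2) yx xi unfolding sl_def2 by simp
            moreover have "ord (lm ord (h' y) + gsig y) (lm ord (hr y) + gsig y)" using add_right le by blast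
            ultimately show ?thesis using 1 trans by blast
          next
            assume "lm ord (h' y) \<in> {w}"
            then have lw: "lm ord (h' y) = w" by simp
            have "Lx x = w + lm ord gx" unfolding Lx_def w_def gx_def by simp
            then have 1: "ord (lm ord (h' y) + lm ord (gpoly y)) (lm ord s)" using bounds lw yx gx_def by simp
            have "lm ord (h' y) + gsig y = \<mu>" using lw yx \<mu>w by (simp add: add.commute)
            then show ?thesis using 1 by simp
          qed
          then show ?thesis using sle_of_ord yx xi by simp
        qed
      qed
    qed
    then show ?thesis using eq unfolding REP_def by blast
  next
    case True
    then have r0: "r \<noteq> 0" and lmr: "lm ord r = Lx x" by auto
    obtain y where yG: "y \<in> G" and ky: "lm ord r \<in> Poly_Mapping.keys (hr y * gpoly y)"
      using lm_sum_attained[OF finG hr(1) r0] by blast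
    define gy where "gy = gpoly y"
    define wy where "wy = lm ord (hr y)"
    have hy0: "hr y \<noteq> 0" and gy0: "gy \<noteq> 0" and le1: "ord (lm ord r) (wy + lm ord gy)"
      using keys_mult_le[OF ky] gy_def wy_def by auto
    have le2: "ord (wy + lm ord gy) (lm ord r)" and sly: "sig_less ord (wy + gsig y, gidx y) (\<mu>, i + 1)"
      using hr(2) yG hy0 gy_def wy_def by auto
    define L where "L = w + lm ord gx"
    have LxL: "Lx x = L" unfolding L_def Lx_def w_def gx_def by simp
    have eqL: "wy + lm ord gy = L" using le1 le2 antisym lmr LxL by metis
    have gxy: "gx \<noteq> gy"
    proof
      assume "gx = gy"
      then have "gsig y = gsig x \<and> gidx y = gidx x" using minsig_unique[OF xG yG] gx_def gy_def by metis
      moreover have "wy = w" using eqL \<open>gx = gy\<close> L_def by simp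
      ultimately have "sig_less ord (\<mu>, i + 1) (\<mu>, i + 1)" using sly \<mu>w xi by (simp add: add.commute)
      then show False using sl_irrefl by blast
    qed
    define t where "t = mlcm (lm ord gx) (lm ord gy)"
    define u where "u = t - lm ord gx"
    define v where "v = t - lm ord gy"
    have tu: "t = lm ord gx + u" using mdvd_diff[OF mdvd_lcm1] t_def u_def by metis
    have tv: "t = lm ord gy + v" using mdvd_diff[OF mdvd_lcm2] t_def v_def by metis
    have "mdvd (lm ord gx) L" unfolding L_def mdvd_def by (metis add.commute)
    moreover have "mdvd (lm ord gy) L" unfolding mdvd_def using eqL by (metis add.commute)
    ultimately have "mdvd t L" using lcm_mdvd t_def by blast
    then obtain m where Lm: "L = t + m" unfolding mdvd_def by blast
    have wm: "w = m + u"
    proof -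
      have "lm ord gx + w = lm ord gx + (m + u)" using L_def Lm tu by (simp add: ac_simps)
      then show ?thesis by simp
    qed
    have wym: "wy = m + v"
    proof -
      have "lm ord gy + wy = lm ord gy + (m + v)" using eqL Lm tv by (simp add: ac_simps)
      then show ?thesis by simp
    qed
    have \<mu>m: "\<mu> = m + (u + gsig x)" using \<mu>w wm by (simp add: ac_simps)
    have "sig_less ord (m + (v + gsig y), gidx y) (m + (u + gsig x), i + 1)"
      using sly wym \<mu>m by (simp add: ac_simps)
    then have SL: "sig_less ord (v + gsig y, gidx y) (u + gsig x, i + 1)" by (rule sl_cancel)
    have P: "sig_le ord (v + gsig y, gidx y) (u + gsig x, i + 1) \<longrightarrow>
            ((gidx y = i + 1 \<and> u + gsig x = v + gsig y) \<or>
             (sig_less ord (v + gsig y, gidx y) (u + gsig x, i + 1) \<and>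
              sig_std_rep ord f (i + 1) G (gc x) (u + gsig x) (spoly ord gx gy)))"
      using pairs xG yG xi gxy unfolding gx_def gy_def t_def u_def v_def Let_def by blast
    have "\<not> (gidx y = i + 1 \<and> u + gsig x = v + gsig y)" using SL sl_irrefl by auto
    then have SR: "sig_std_rep ord f (i + 1) G (gc x) (u + gsig x) (spoly ord gx gy)"
      using P SL unfolding sig_le_def by blast
    define S where "S = spoly ord gx gy"
    define \<kappa> where "\<kappa> = lc ord gx / lc ord gy"
    have \<kappa>: "\<kappa> \<noteq> 0" using lc_nz[OF gx0] lc_nz[OF gy0] \<kappa>_def by simp
    have Sdef: "S = tmul 1 u gx - tmul \<kappa> v gy"
      unfolding S_def spoly_def Let_def t_def u_def v_def \<kappa>_def by simp
    obtain hS where hS: "S = (\<Sum>z\<in>G. hS z * gpoly z)"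
      "\<forall>z\<in>G. hS z = 0 \<or> (ord (lm ord (hS z) + lm ord (gpoly z)) (lm ord S) \<and> sig_le ord (lm ord (hS z) + gsig z, gidx z) (u + gsig x, i + 1))"
      using SR unfolding sig_std_rep_def S_def by blast
    define Y where "Y = tmul \<kappa> wy gy"
    have YB: "inBlt \<mu> Y"
    proof -
      have "Y = Poly_Mapping.single wy \<kappa> * gpoly y" unfolding Y_def tmul_def gy_def by simp
      moreover have "inBlt \<mu> (Poly_Mapping.single wy \<kappa> * gpoly y)"
        by (rule inBlt_term[OF yG]) (use sly lm_single[OF \<kappa>] in simp)
      ultimately show ?thesis by simp
    qed
    have ident: "tmul 1 w gx = tmul 1 m S + Y"
      unfolding Sdef Y_def tmul_diff tmul_tmul wm wym by simp
    have SB: "inBlt \<mu> (tmul 1 m S)"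
    proof (cases "S = 0")
      case True then show ?thesis by (simp add: inBlt_zero)
    next
      case S0: False
      have keysS: "\<forall>s\<in>Poly_Mapping.keys S. ord s t \<and> s \<noteq> t"
        unfolding Sdef
      proof (rule diff_lt)
        show "\<forall>s\<in>Poly_Mapping.keys (tmul 1 u gx). ord s t"
        proof
          fix s assume "s \<in> Poly_Mapping.keys (tmul 1 u gx)"
          then obtain s' where "s = u + s'" "s' \<in> Poly_Mapping.keys gx" using keys_tmul[of 1 u gx] by blast
          then show "ord s t" using keys_le_lm[of s' gx] add_left tu by (metis add.commute)
        qed
        show "\<forall>s\<in>Poly_Mapping.keys (tmul \<kappa> v gy). ord s t"
        proof
          fix s assume "s \<in> Poly_Mapping.keys (tmul \<kappa> v gy)"
          then obtain s' where "s = v + s'" "s' \<in> Poly_Mapping.keys gy" using keys_tmul[of \<kappa> v gy] by blast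
          then show "ord s t" using keys_le_lm[of s' gy] add_left tv by (metis add.commute)
        qed
        have "Poly_Mapping.lookup (tmul 1 u gx) t = lc ord gx"
          using lookup_tmul[of 1 u gx "lm ord gx"] tu unfolding lc_def by (simp add: add.commute)
        moreover have "Poly_Mapping.lookup (tmul \<kappa> v gy) t = \<kappa> * lc ord gy"
          using lookup_tmul[of \<kappa> v gy "lm ord gy"] tv unfolding lc_def by (simp add: add.commute)
        ultimately show "Poly_Mapping.lookup (tmul 1 u gx) t = Poly_Mapping.lookup (tmul \<kappa> v gy) t"
          using \<kappa>_def lc_nz[OF gy0] by simp
      qed
      have lmS: "ord (lm ord S) t" "lm ord S \<noteq> t" using keysS lm_in[OF S0] by auto
      show ?thesis
      proof (cases "\<exists>z\<in>G. hS z \<noteq> 0 \<and> lm ord (hS z) + gsig z = u + gsig x \<and> gidx z = i + 1")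
        case True
        then obtain z where z: "z \<in> G" "hS z \<noteq> 0" "lm ord (hS z) + gsig z = u + gsig x" "gidx z = i + 1" by blast
        have \<mu>z: "\<mu> = gsig z + (m + lm ord (hS z))" using \<mu>m z(3) by (simp add: ac_simps)
        have zC: "z \<in> C" unfolding C_def mdvd_def using z \<mu>z by blast
        have "\<mu> - gsig z = m + lm ord (hS z)" using \<mu>z by simp
        then have Lz: "Lx z = m + (lm ord (hS z) + lm ord (gpoly z))"
          unfolding Lx_def by (simp add: ac_simps)
        have "ord (lm ord (hS z) + lm ord (gpoly z)) (lm ord S)" using hS(2) z by blast
        then have "ord (lm ord (hS z) + lm ord (gpoly z)) t" "lm ord (hS z) + lm ord (gpoly z) \<noteq> t"
          using lmS trans antisym by metis+
        then have "ord (Lx z) (m + t)" "Lx z \<noteq> m + t" using add_strict_left Lz by auto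
        moreover have "Lx x = m + t" using LxL Lm by (simp add: add.commute)
        moreover have "ord (Lx x) (Lx z)" using x(2) zC by blast
        ultimately have False using antisym by metis
        then show ?thesis ..
      next
        case False
        have "\<forall>z\<in>G. hS z = 0 \<or> sig_less ord (lm ord (hS z) + gsig z, gidx z) (u + gsig x, i + 1)"
          using hS(2) False unfolding sig_le_def by auto
        then have "inBlt (u + gsig x) S" using inBlt_rep hS(1) by simp
        then have "inBlt (m + (u + gsig x)) (tmul 1 m S)" by (rule inBlt_tmul)
        then show ?thesis using \<mu>m by simp
      qed
    qed
    have "inBlt \<mu> (tmul 1 w gx)" unfolding ident using SB YB by (rule inBlt_add)
    then have "inBlt \<mu> (tmul k 0 (tmul 1 w gx))" by (rule inBlt_scale)
    then have "inBlt \<mu> T" unfolding T_def tmul_tmul by simp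
    then have "inBlt \<mu> s" using rBlt sr inBlt_add by simp
    then show ?thesis using notlt by blast
  qed
qed

end



context setting begin

lemma main_claim: "inB \<mu> s \<Longrightarrow> REP (\<lambda>\<sigma>. sig_le ord \<sigma> (\<mu>, i + 1)) s"
proof (induction \<mu> arbitrary: s rule: lt_induct)
  case (1 \<mu>)
  have "\<And>q. inBlt \<mu> q \<Longrightarrow> REP (\<lambda>\<sigma>. sig_less ord \<sigma> (\<mu>, i + 1)) q"
    by (rule IH_lt) (use 1 in blast)+
  then show ?case using main_step 1(2) by blast
qed

lemma GB: "is_GB ord (gpoly ` G) (gen_ideal f (i + 1))"
  unfolding is_GB_def
proof (intro conjI)
  show "finite (gpoly ` G)" using finG by simp
  show "gpoly ` G \<subseteq> gen_ideal f (i + 1)"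
    using g_in II_sub F_in p_in unfolding G_def gpoly_def by auto
  show "\<forall>q\<in>gen_ideal f (i + 1). q \<noteq> 0 \<longrightarrow> (\<exists>g\<in>gpoly ` G. g \<noteq> 0 \<and> mdvd (lm ord g) (lm ord q))"
  proof (intro ballI impI)
    fix q assume q: "q \<in> gen_ideal f (i + 1)" "q \<noteq> 0"
    obtain a h where ah: "a \<in> II" "q = a + h * F" using I1_split[OF q(1)] by blast
    have "inB (lm ord h) q" unfolding inB_def
      by (rule exI[of _ a], rule exI[of _ h]) (use ah keys_le_lm in auto)
    then have "REP (\<lambda>\<sigma>. sig_le ord \<sigma> (lm ord h, i + 1)) q" by (rule main_claim)
    then obtain hq where hq: "q = (\<Sum>x\<in>G. hq x * gpoly x)"
      "\<forall>x\<in>G. hq x = 0 \<or> ord (lm ord (hq x) + lm ord (gpoly x)) (lm ord q)"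
      unfolding REP_def by blast
    obtain y where yG: "y \<in> G" and ky: "lm ord q \<in> Poly_Mapping.keys (hq y * gpoly y)"
      using lm_sum_attained[OF finG hq(1) q(2)] by blast
    have "hq y \<noteq> 0" "gpoly y \<noteq> 0" "ord (lm ord q) (lm ord (hq y) + lm ord (gpoly y))"
      using keys_mult_le[OF ky] by auto
    moreover have "ord (lm ord (hq y) + lm ord (gpoly y)) (lm ord q)" using hq(2) yG calculation(1) by blast
    ultimately have "lm ord q = lm ord (gpoly y) + lm ord (hq y)" using antisym by (metis add.commute)
    then have "mdvd (lm ord (gpoly y)) (lm ord q)" unfolding mdvd_def by blast
    then show "\<exists>g\<in>gpoly ` G. g \<noteq> 0 \<and> mdvd (lm ord g) (lm ord q)" using yG \<open>gpoly y \<noteq> 0\<close> by blast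
  qed
qed

end

theorem mainTheorem4:
  fixes ord :: "'v::finite mon \<Rightarrow> 'v mon \<Rightarrow> bool"
    and f :: "nat \<Rightarrow> ('v, 'k::field) mpoly"
    and i M l :: nat
    and g :: "nat \<Rightarrow> ('v, 'k) mpoly" and sg :: "nat \<Rightarrow> 'v mon" and jg :: "nat \<Rightarrow> nat"
    and p :: "nat \<Rightarrow> ('v, 'k) mpoly" and d :: "nat \<Rightarrow> 'k" and tau :: "nat \<Rightarrow> 'v mon"
    and G :: "('k \<times> 'v mon \<times> nat \<times> ('v, 'k) mpoly) set"
  assumes ord: "deg_mon_order ord"
    and notin: "f (i + 1) \<notin> gen_ideal f i"
    and g_in: "\<forall>k<M. g k \<in> gen_ideal f i"
    and g_GB: "is_GB ord {g k | k. k < M} (gen_ideal f i)"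
    and p_in: "\<forall>k<l. p k \<in> gen_ideal f (i + 1) \<and> p k \<noteq> 0"
    and d_nz: "\<forall>k<l. d k \<noteq> 0"
    and jg_le: "\<forall>k<M. jg k \<le> i"
    and G_def: "G = {(1, sg k, jg k, g k) | k. k < M}
                  \<union> {(1, 0, i + 1, f (i + 1))}
                  \<union> {(d k, tau k, i + 1, p k) | k. k < l}"
    and G_sig: "\<forall>x\<in>G. is_sig ord f (i + 1) (gc x) (gsig x) (gidx x) (gpoly x)
                     \<and> is_minsig ord f (i + 1) (gsig x) (gidx x) (gpoly x)"
    and pairs: "\<forall>x\<in>G. \<forall>y\<in>G. gidx x = i + 1 \<and> gpoly x \<noteq> gpoly y \<longrightarrow>
        (let t = mlcm (lm ord (gpoly x)) (lm ord (gpoly y));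
             u = t - lm ord (gpoly x); v = t - lm ord (gpoly y)
         in sig_le ord (v + gsig y, gidx y) (u + gsig x, i + 1) \<longrightarrow>
            ((gidx y = i + 1 \<and> u + gsig x = v + gsig y) \<or>
             (sig_less ord (v + gsig y, gidx y) (u + gsig x, i + 1) \<and>
              sig_std_rep ord f (i + 1) G (gc x) (u + gsig x) (spoly ord (gpoly x) (gpoly y)))))"
  shows "is_GB ord (gpoly ` G) (gen_ideal f (i + 1))"
proof -
  interpret setting ord f i M l g sg jg p d tau G
    by (unfold_locales; fact assms)
  show ?thesis by (rule GB)
qed



end
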